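(* Let $t \geq 1$ be an integer and let $\mathcal{F} \neq \emptyset$ be a finite family of finite sets. Then $\beta(\mathcal{F},t) \geq \frac{1}{|\mathcal{F}|}$, and equality holds if and only if $|A \cap B| < t$ for any distinct $A$ and $B$ in $\mathcal{F}$.
   Context: A family $\mathcal{A}$ is $t$-intersecting if $|A \cap B| \geq t$ for all $A, B \in \mathcal{A}$ with $A \neq B$. $l(\mathcal{F},t)$ is the size of a largest $t$-intersecting sub-family of $\mathcal{F}$. For a family $\mathcal{A}$, $\mathcal{A}^{t,+} = \{A \in \mathcal{A} : |A \cap B| \geq t \text{ for all } B \in \mathcal{A}\setminus\{A\}\}$ and $\mathcal{A}^{t,-} = \mathcal{A} \setminus \mathcal{A}^{t,+}$. For $\mathcal{A} \subseteq \mathcal{F}$, $\beta(\mathcal{F},t,\mathcal{A}) = \frac{l(\mathcal{F},t) - |\mathcal{A}^{t,+}|}{|\mathcal{A}^{t,-}|}$ if $\mathcal{A}^{t,-} \neq \emptyset$, and $\frac{l(\mathcal{F},t)}{|\mathcal{F}|}$ if $\mathcal{A}^{t,-} = \emptyset$; $\beta(\mathcal{F},t) = \min\{\beta(\mathcal{F},t,\mathcal{A}) : \mathcal{A} \subseteq \mathcal{F}\}$. *)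

theory Defs
  imports Complex_Main
begin

definition t_intersecting :: "'a set set \<Rightarrow> nat \<Rightarrow> bool" where
  "t_intersecting \<A> t \<longleftrightarrow> (\<forall>A\<in>\<A>. \<forall>B\<in>\<A>. A \<noteq> B \<longrightarrow> card (A \<inter> B) \<ge> t)"

definition l_int :: "'a set set \<Rightarrow> nat \<Rightarrow> nat" where
  "l_int \<F> t = Max {card \<A> | \<A>. \<A> \<subseteq> \<F> \<and> t_intersecting \<A> t}"

definition plus_part :: "'a set set \<Rightarrow> nat \<Rightarrow> 'a set set" where
  "plus_part \<A> t = {A \<in> \<A>. \<forall>B \<in> \<A> - {A}. card (A \<inter> B) \<ge> t}"

definition minus_part :: "'a set set \<Rightarrow> nat \<Rightarrow> 'a set set" where
  "minus_part \<A> t = \<A> - plus_part \<A> t"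

definition beta_A :: "'a set set \<Rightarrow> nat \<Rightarrow> 'a set set \<Rightarrow> real" where
  "beta_A \<F> t \<A> =
     (if minus_part \<A> t \<noteq> {}
      then (real (l_int \<F> t) - real (card (plus_part \<A> t))) / real (card (minus_part \<A> t))
      else real (l_int \<F> t) / real (card \<F>))"

definition beta :: "'a set set \<Rightarrow> nat \<Rightarrow> real" where
  "beta \<F> t = Min {beta_A \<F> t \<A> | \<A>. \<A> \<subseteq> \<F>}"

end

theory Submission
  imports Defs
begin

lemma l_set_fin:
  assumes "finite F"
  shows "finite {card A | A. A \<subseteq> F \<and> t_intersecting A t}"
proof -
  have "{card A | A. A \<subseteq> F \<and> t_intersecting A t} \<subseteq> {0..card F}"
    using assms by (auto intro: card_mono)
  thus ?thesis using finite_subset by blast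
qed

lemma l_ge:
  assumes "finite F" "A \<subseteq> F" "t_intersecting A t"
  shows "card A \<le> l_int F t"
  unfolding l_int_def using l_set_fin[OF assms(1)] assms(2,3)
  by (intro Max_ge) auto

lemma l_ge1:
  assumes "finite F" "F \<noteq> {}"
  shows "1 \<le> l_int F t"
proof -
  obtain x where "x \<in> F" using assms by auto
  hence "card {x} \<le> l_int F t"
    by (intro l_ge[OF assms(1)]) (auto simp: t_intersecting_def)
  thus ?thesis by simp
qed

lemma l_in:
  assumes "finite F"
  shows "\<exists>A. A \<subseteq> F \<and> t_intersecting A t \<and> card A = l_int F t"
proof -
  have "{} \<subseteq> F \<and> t_intersecting {} t" by (auto simp: t_intersecting_def)
  hence ne: "{card A | A. A \<subseteq> F \<and> t_intersecting A t} \<noteq> {}" by blast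
  show ?thesis
    using Max_in[OF l_set_fin[OF assms] ne] unfolding l_int_def by auto
qed

lemma beta_A_ge:
  assumes "finite F" "F \<noteq> {}" "A \<subseteq> F"
  shows "beta_A F t A \<ge> 1 / real (card F)
     \<and> (beta_A F t A = 1 / real (card F) \<longrightarrow> l_int F t = 1)"
proof (cases "minus_part A t = {}")
  case True
  have "1 \<le> l_int F t" using l_ge1[OF assms(1,2)] .
  moreover have "card F > 0" using assms by (simp add: card_gt_0_iff)
  ultimately show ?thesis using True unfolding beta_A_def
    by (auto simp: divide_right_mono)
next
  case False
  then obtain X where X: "X \<in> minus_part A t" by auto
  have finA: "finite A" using assms finite_subset by blast
  have pA: "plus_part A t \<subseteq> A" unfolding plus_part_def by auto
  have Xn: "X \<notin> plus_part A t" "X \<in> A" using X unfolding minus_part_def by auto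
  have ti: "t_intersecting (insert X (plus_part A t)) t"
    unfolding t_intersecting_def plus_part_def using Xn(2)
    by (auto simp: Int_commute)
  have "card (insert X (plus_part A t)) \<le> l_int F t"
    using l_ge[OF assms(1) _ ti] pA Xn assms(3) by auto
  moreover have "card (insert X (plus_part A t)) = Suc (card (plus_part A t))"
    using Xn(1) finite_subset[OF pA finA] by simp
  ultimately have d: "real (l_int F t) - real (card (plus_part A t)) \<ge> 1" by linarith
  have m0: "card (minus_part A t) > 0" using False finA
    by (simp add: card_gt_0_iff minus_part_def)
  have mF: "card (minus_part A t) \<le> card F"
    using assms(1,3) by (intro card_mono) (auto simp: minus_part_def)
  have "1 / real (card F) \<le> 1 / real (card (minus_part A t))"
    using m0 mF by (simp add: frac_le)
  also have "\<dots> \<le> (real (l_int F t) - real (card (plus_part A t))) / real (card (minus_part A t))"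
    using d m0 by (simp add: divide_right_mono)
  finally have ge: "1 / real (card F) \<le> beta_A F t A" using False by (simp add: beta_A_def)
  have eq: "l_int F t = 1" if h: "beta_A F t A = 1 / real (card F)"
  proof -
    have e1: "1 / real (card F) = 1 / real (card (minus_part A t))"
      and e2: "1 / real (card (minus_part A t)) = (real (l_int F t) - real (card (plus_part A t))) / real (card (minus_part A t))"
      using h False \<open>1 / real (card F) \<le> 1 / real (card (minus_part A t))\<close>
        \<open>1 / real (card (minus_part A t)) \<le> _\<close> by (auto simp: beta_A_def)
    have "real (l_int F t) - real (card (plus_part A t)) = 1"
      using e2 m0 by (simp add: field_simps)
    moreover have "card (minus_part A t) = card F" using e1 m0 by simp
    hence "minus_part A t = F"
      using mF assms(1) by (metis Diff_subset assms(3) card_subset_eq minus_part_def order_trans)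
    hence "plus_part A t = {}" using pA assms(3) unfolding minus_part_def by auto
    ultimately show ?thesis by simp
  qed
  show ?thesis using ge eq by blast
qed

theorem proposition3p1:
  fixes \<F> :: "'a set set" and t :: nat
  assumes "t \<ge> 1"
    and "finite \<F>" and "\<F> \<noteq> {}"
    and "\<forall>A\<in>\<F>. finite A"
  shows "beta \<F> t \<ge> 1 / real (card \<F>)
    \<and> (beta \<F> t = 1 / real (card \<F>) \<longleftrightarrow>
         (\<forall>A\<in>\<F>. \<forall>B\<in>\<F>. A \<noteq> B \<longrightarrow> card (A \<inter> B) < t))"
proof -
  let ?S = "{beta_A \<F> t \<A> | \<A>. \<A> \<subseteq> \<F>}"
  have Seq: "?S = (beta_A \<F> t) ` Pow \<F>" by auto
  have finS: "finite ?S" using assms(2) Seq by simp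
  have neS: "?S \<noteq> {}" by blast
  have bin: "beta \<F> t \<in> ?S" unfolding beta_def using Min_in[OF finS neS] .
  then obtain A0 where A0: "A0 \<subseteq> \<F>" "beta \<F> t = beta_A \<F> t A0" by auto
  have ge: "beta \<F> t \<ge> 1 / real (card \<F>)"
    using beta_A_ge[OF assms(2,3) A0(1)] A0(2) by simp
  have "(\<forall>A\<in>\<F>. \<forall>B\<in>\<F>. A \<noteq> B \<longrightarrow> card (A \<inter> B) < t)"
    if h: "beta \<F> t = 1 / real (card \<F>)"
  proof (intro ballI impI)
    fix A B assume AB: "A \<in> \<F>" "B \<in> \<F>" "A \<noteq> B"
    have l1: "l_int \<F> t = 1" using beta_A_ge[OF assms(2,3) A0(1)] A0(2) h by simp
    show "card (A \<inter> B) < t"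
    proof (rule ccontr)
      assume "\<not> card (A \<inter> B) < t"
      hence "t_intersecting {A, B} t" by (auto simp: t_intersecting_def Int_commute)
      hence "card {A, B} \<le> l_int \<F> t" using l_ge[OF assms(2), of "{A,B}" t] AB by auto
      moreover have "card {A, B} = 2" using AB(3) by simp
      ultimately show False using l1 by simp
    qed
  qed
  moreover have "beta \<F> t = 1 / real (card \<F>)"
    if h: "\<forall>A\<in>\<F>. \<forall>B\<in>\<F>. A \<noteq> B \<longrightarrow> card (A \<inter> B) < t"
  proof -
    obtain C where C: "C \<subseteq> \<F>" "t_intersecting C t" "card C = l_int \<F> t"
      using l_in[OF assms(2)] by blast
    have "\<forall>x\<in>C. \<forall>y\<in>C. x = y" using C(1,2) h unfolding t_intersecting_def
      by (meson not_le subsetD)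
    hence "card C \<le> 1" by (simp add: card_le_Suc0_iff_eq finite_subset[OF C(1) assms(2)])
    hence l1: "l_int \<F> t = 1" using C(3) l_ge1[OF assms(2,3), of t] by simp
    have "beta_A \<F> t {} = 1 / real (card \<F>)"
      using l1 by (simp add: beta_A_def minus_part_def plus_part_def)
    hence "beta \<F> t \<le> 1 / real (card \<F>)"
      unfolding beta_def by (metis (mono_tags, lifting) Min_le empty_subsetI finS mem_Collect_eq)
    thus ?thesis using ge by simp
  qed
  ultimately show ?thesis using ge by blast
qed

end
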